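(* Let $T\in\mathcal{KC}(V)$ and $s,p\in\rho_S(T)$ with $s\notin[p]$. Then $$Q_{c,s}^{-1}(T)S_L^{-1}(p,s)+S_R^{-1}(s,p)Q_{c,p}^{-1}(T)=Q_{c,s}^{-1}(T)S_L^{-1}(p,T)+S_R^{-1}(s,\overline{T})Q_{c,p}^{-1}(T)=Q_{c,s}^{-1}(T)S_L^{-1}(p,\overline{T})+S_R^{-1}(s,T)Q_{c,p}^{-1}(T).$$
   Context: $\mathbb{H}$: quaternions $s=s_0+s_1e_1+s_2e_2+s_3e_3$ with $e_1^2=e_2^2=e_3^2=-1$, $e_1e_2=-e_2e_1=e_3$, $e_2e_3=-e_3e_2=e_1$, $e_3e_1=-e_1e_3=e_2$; $\overline{s}=s_0-s_1e_1-s_2e_2-s_3e_3$, $|s|$ Euclidean norm, $\mathbb{S}=\{s:s_0=0,|s|=1\}$, and $[p]=\{p_0+J|p-p_0|:J\in\mathbb{S}\}$. For quaternions $s,p$ with $s\notin[p]$, the Cauchy kernels are $S_L^{-1}(p,s):=(p-\overline{s})(p^2-2s_0p+|s|^2)^{-1}$ and $S_R^{-1}(s,p):=(s^2-2p_0s+|p|^2)^{-1}(s-\overline{p})$. $V$ is a two-sided Banach space over $\mathbb{H}$, $\mathcal{I}$ the identity. $\mathcal{KC}(V)$: closed right-linear operators $T$ with two-sided linear domain, $T=T_0+e_1T_1+e_2T_2+e_3T_3$ with two-sided linear $T_i$, $\operatorname{dom}(T_i)=\operatorname{dom}(T)$, $\operatorname{dom}(T^2)\subseteq\operatorname{dom}(T_iT_j)$,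 $T_iT_j=T_jT_i$ on $\operatorname{dom}(T^2)$. $\overline{T}:=T_0-e_1T_1-e_2T_2-e_3T_3\in\mathcal{KC}(V)$ (with components $T_0,-T_1,-T_2,-T_3$), $|T|^2:=\sum_iT_i^2$, $Q_{c,s}(T):=s^2\mathcal{I}-2sT_0+|T|^2$ on $\operatorname{dom}(T^2)$ (note $Q_{c,s}(\overline{T})=Q_{c,s}(T)$). $\rho_S(T)$: the $s\in\mathbb{H}$ with $Q_{c,s}(T):\operatorname{dom}(T^2)\to V$ bijective, $Q_{c,s}^{-1}(T)$ the inverse. For $s\in\rho_S(T)$ and an operator $A\in\{T,\overline{T}\}$ with components $A_0,\dots,A_3$: $S_L^{-1}(s,A):=(s\mathcal{I}-\overline{A})Q_{c,s}^{-1}(T)$ and $S_R^{-1}(s,A):=sQ_{c,s}^{-1}(T)-\sum_{i=0}^3A_iQ_{c,s}^{-1}(T)\overline{e_i}$ (with $e_0=1$, $\overline{\overline{T}}=T$). *)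

theory Defs
  imports "HOL-Analysis.Analysis"
begin

datatype quat = Quat (Re0: real) (Im1: real) (Im2: real) (Im3: real)

lemma quat_eq_iff: "x = y \<longleftrightarrow> Re0 x = Re0 y \<and> Im1 x = Im1 y \<and> Im2 x = Im2 y \<and> Im3 x = Im3 y"
  by (cases x; cases y) auto

instantiation quat :: division_ring
begin

definition "0 = Quat 0 0 0 0"
definition "1 = Quat 1 0 0 0"
definition "x + y = Quat (Re0 x + Re0 y) (Im1 x + Im1 y) (Im2 x + Im2 y) (Im3 x + Im3 y)"
definition "- x = Quat (- Re0 x) (- Im1 x) (- Im2 x) (- Im3 x)"
definition "x - y = Quat (Re0 x - Re0 y) (Im1 x - Im1 y) (Im2 x - Im2 y) (Im3 x - Im3 y)"
definition "x * y = Quat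
   (Re0 x * Re0 y - Im1 x * Im1 y - Im2 x * Im2 y - Im3 x * Im3 y)
   (Re0 x * Im1 y + Im1 x * Re0 y + Im2 x * Im3 y - Im3 x * Im2 y)
   (Re0 x * Im2 y - Im1 x * Im3 y + Im2 x * Re0 y + Im3 x * Im1 y)
   (Re0 x * Im3 y + Im1 x * Im2 y - Im2 x * Im1 y + Im3 x * Re0 y)"
definition "inverse x = (let n = (Re0 x)\<^sup>2 + (Im1 x)\<^sup>2 + (Im2 x)\<^sup>2 + (Im3 x)\<^sup>2 in
   Quat (Re0 x / n) (- Im1 x / n) (- Im2 x / n) (- Im3 x / n))"
definition "x div y = x * inverse (y :: quat)"

lemma quat_norm_pos: "x \<noteq> 0 \<Longrightarrow> (Re0 x)\<^sup>2 + (Im1 x)\<^sup>2 + (Im2 x)\<^sup>2 + (Im3 x)\<^sup>2 \<noteq> 0"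
  by (cases x) (auto simp: zero_quat_def add_nonneg_eq_0_iff)

instance
proof
  fix a b c :: quat
  show "a * b * c = a * (b * c)" by (simp add: times_quat_def algebra_simps)
  show "1 * a = a" by (cases a) (simp add: times_quat_def one_quat_def)
  show "a * 1 = a" by (cases a) (simp add: times_quat_def one_quat_def)
  show "(a + b) * c = a * c + b * c" by (simp add: times_quat_def plus_quat_def algebra_simps)
  show "a * (b + c) = a * b + a * c" by (simp add: times_quat_def plus_quat_def algebra_simps)
  show "a + b + c = a + (b + c)" by (simp add: plus_quat_def algebra_simps)
  show "a + b = b + a" by (simp add: plus_quat_def algebra_simps)
  show "0 + a = a" by (cases a) (simp add: plus_quat_def zero_quat_def)
  show "- a + a = 0" by (simp add: plus_quat_def uminus_quat_def zero_quat_def)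
  show "a - b = a + - b" by (simp add: plus_quat_def uminus_quat_def minus_quat_def)
  show "(0::quat) \<noteq> 1" by (simp add: zero_quat_def one_quat_def)
  show "inverse (0::quat) = 0" by (simp add: inverse_quat_def zero_quat_def)
next
  fix x y :: quat
  show "x div y = x * inverse y" by (simp add: divide_quat_def)
next
  fix a :: quat assume a: "a \<noteq> 0"
  obtain w x y z where aq: "a = Quat w x y z" by (cases a)
  have n: "w\<^sup>2 + x\<^sup>2 + y\<^sup>2 + z\<^sup>2 \<noteq> 0" using quat_norm_pos[OF a] aq by simp
  define n where "n = w\<^sup>2 + x\<^sup>2 + y\<^sup>2 + z\<^sup>2"
  have n0: "n \<noteq> 0" using n n_def by simp
  have e1: "w * w + x * x + y * y + z * z = n" by (simp add: n_def power2_eq_square)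
  have "inverse a = Quat (w / n) (- x / n) (- y / n) (- z / n)"
    by (simp add: inverse_quat_def aq n_def Let_def)
  note iv = this
  have c1: "w / n * w - - x / n * x - - y / n * y - - z / n * z = 1"
    using n0 e1 by (simp add: field_simps)
  have c2: "w * (w / n) - x * (- x / n) - y * (- y / n) - z * (- z / n) = 1"
    using n0 e1 by (simp add: field_simps)
  show "inverse a * a = 1" unfolding iv using c1
    by (simp add: times_quat_def one_quat_def aq algebra_simps)
  show "a * inverse a = 1" unfolding iv using c2
    by (simp add: times_quat_def one_quat_def aq algebra_simps)
qed
end

definition qreal :: "real \<Rightarrow> quat" where "qreal r = Quat r 0 0 0"

definition qcnj :: "quat \<Rightarrow> quat" where
  "qcnj x = Quat (Re0 x) (- Im1 x) (- Im2 x) (- Im3 x)"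

definition qnorm :: "quat \<Rightarrow> real" where
  "qnorm x = sqrt ((Re0 x)\<^sup>2 + (Im1 x)\<^sup>2 + (Im2 x)\<^sup>2 + (Im3 x)\<^sup>2)"

definition qe :: "nat \<Rightarrow> quat" where
  "qe i = (if i = 0 then Quat 1 0 0 0 else if i = 1 then Quat 0 1 0 0
           else if i = 2 then Quat 0 0 1 0 else Quat 0 0 0 1)"

definition qS :: "quat set" where "qS = {J. Re0 J = 0 \<and> qnorm J = 1}"

definition qsphere :: "quat \<Rightarrow> quat set" where
  "qsphere p = {qreal (Re0 p) + J * qreal (qnorm (p - qreal (Re0 p))) | J. J \<in> qS}"

definition SLq :: "quat \<Rightarrow> quat \<Rightarrow> quat" where
  "SLq p s = (p - qcnj s) * inverse (p\<^sup>2 - 2 * qreal (Re0 s) * p + qreal ((qnorm s)\<^sup>2))"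

definition SRq :: "quat \<Rightarrow> quat \<Rightarrow> quat" where
  "SRq s p = inverse (s\<^sup>2 - 2 * qreal (Re0 p) * s + qreal ((qnorm p)\<^sup>2)) * (s - qcnj p)"

definition two_sided_qbanach :: "(quat \<Rightarrow> 'v::banach \<Rightarrow> 'v) \<Rightarrow> ('v \<Rightarrow> quat \<Rightarrow> 'v) \<Rightarrow> bool" where
  "two_sided_qbanach lm rm \<longleftrightarrow>
     (\<forall>a v w. lm a (v + w) = lm a v + lm a w) \<and>
     (\<forall>a b v. lm (a + b) v = lm a v + lm b v) \<and>
     (\<forall>a b v. lm (a * b) v = lm a (lm b v)) \<and>
     (\<forall>v. lm 1 v = v) \<and>
     (\<forall>a v w. rm (v + w) a = rm v a + rm w a) \<and>
     (\<forall>a b v. rm v (a + b) = rm v a + rm v b) \<and>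
     (\<forall>a b v. rm v (a * b) = rm (rm v a) b) \<and>
     (\<forall>v. rm v 1 = v) \<and>
     (\<forall>a b v. rm (lm a v) b = lm a (rm v b)) \<and>
     (\<forall>r v. lm (qreal r) v = r *\<^sub>R v \<and> rm v (qreal r) = r *\<^sub>R v) \<and>
     (\<forall>a v. norm (lm a v) = qnorm a * norm v \<and> norm (rm v a) = qnorm a * norm v)"

definition two_sided_subspace :: "(quat \<Rightarrow> 'v::banach \<Rightarrow> 'v) \<Rightarrow> ('v \<Rightarrow> quat \<Rightarrow> 'v) \<Rightarrow> 'v set \<Rightarrow> bool" where
  "two_sided_subspace lm rm D \<longleftrightarrow> 0 \<in> D \<and> (\<forall>v\<in>D. \<forall>w\<in>D. v + w \<in> D) \<and>
     (\<forall>a. \<forall>v\<in>D. lm a v \<in> D \<and> rm v a \<in> D)"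

definition two_sided_linear_on ::
  "(quat \<Rightarrow> 'v::banach \<Rightarrow> 'v) \<Rightarrow> ('v \<Rightarrow> quat \<Rightarrow> 'v) \<Rightarrow> 'v set \<Rightarrow> ('v \<Rightarrow> 'v) \<Rightarrow> bool" where
  "two_sided_linear_on lm rm D A \<longleftrightarrow> (\<forall>v\<in>D. \<forall>w\<in>D. A (v + w) = A v + A w) \<and>
     (\<forall>a. \<forall>v\<in>D. A (lm a v) = lm a (A v) \<and> A (rm v a) = rm (A v) a)"

definition right_linear_on ::
  "('v::banach \<Rightarrow> quat \<Rightarrow> 'v) \<Rightarrow> 'v set \<Rightarrow> ('v \<Rightarrow> 'v) \<Rightarrow> bool" where
  "right_linear_on rm D A \<longleftrightarrow> (\<forall>v\<in>D. \<forall>w\<in>D. A (v + w) = A v + A w) \<and>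
     (\<forall>a. \<forall>v\<in>D. A (rm v a) = rm (A v) a)"

text \<open>An operator is given by its domain D and its components Tc 0, ..., Tc 3:
  T = T_0 + e_1 T_1 + e_2 T_2 + e_3 T_3 on D.\<close>
definition opT :: "(quat \<Rightarrow> 'v::banach \<Rightarrow> 'v) \<Rightarrow> (nat \<Rightarrow> 'v \<Rightarrow> 'v) \<Rightarrow> 'v \<Rightarrow> 'v" where
  "opT lm Tc v = (\<Sum>i<4. lm (qe i) (Tc i v))"

definition dom2 :: "'v set \<Rightarrow> (quat \<Rightarrow> 'v::banach \<Rightarrow> 'v) \<Rightarrow> (nat \<Rightarrow> 'v \<Rightarrow> 'v) \<Rightarrow> 'v set" where
  "dom2 D lm Tc = {v \<in> D. opT lm Tc v \<in> D}"

definition KC :: "(quat \<Rightarrow> 'v::banach \<Rightarrow> 'v) \<Rightarrow> ('v \<Rightarrow> quat \<Rightarrow> 'v) \<Rightarrow> 'v set \<Rightarrow> (nat \<Rightarrow> 'v \<Rightarrow> 'v) \<Rightarrow> bool" where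
  "KC lm rm D Tc \<longleftrightarrow>
     two_sided_subspace lm rm D \<and>
     right_linear_on rm D (opT lm Tc) \<and>
     closed {(v, opT lm Tc v) | v. v \<in> D} \<and>
     (\<forall>i<4. two_sided_linear_on lm rm D (Tc i)) \<and>
     (\<forall>j<4. dom2 D lm Tc \<subseteq> {v \<in> D. Tc j v \<in> D}) \<and>
     (\<forall>i<4. \<forall>j<4. \<forall>v\<in>dom2 D lm Tc. Tc i (Tc j v) = Tc j (Tc i v))"

definition cnjop :: "(nat \<Rightarrow> 'v::banach \<Rightarrow> 'v) \<Rightarrow> nat \<Rightarrow> 'v \<Rightarrow> 'v" where
  "cnjop Tc i = (if i = 0 then Tc 0 else (\<lambda>v. - Tc i v))"

text \<open>Q_{c,s}(T) = s^2 I - 2 s T_0 + |T|^2 (meaningful on dom(T^2)).\<close>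
definition Qc :: "(quat \<Rightarrow> 'v::banach \<Rightarrow> 'v) \<Rightarrow> (nat \<Rightarrow> 'v \<Rightarrow> 'v) \<Rightarrow> quat \<Rightarrow> 'v \<Rightarrow> 'v" where
  "Qc lm Tc s v = lm (s\<^sup>2) v - lm (2 * s) (Tc 0 v) + (\<Sum>i<4. Tc i (Tc i v))"

definition rhoS :: "'v set \<Rightarrow> (quat \<Rightarrow> 'v::banach \<Rightarrow> 'v) \<Rightarrow> (nat \<Rightarrow> 'v \<Rightarrow> 'v) \<Rightarrow> quat set" where
  "rhoS D lm Tc = {s. bij_betw (Qc lm Tc s) (dom2 D lm Tc) UNIV}"

definition Qinv :: "'v set \<Rightarrow> (quat \<Rightarrow> 'v::banach \<Rightarrow> 'v) \<Rightarrow> (nat \<Rightarrow> 'v \<Rightarrow> 'v) \<Rightarrow> quat \<Rightarrow> 'v \<Rightarrow> 'v" where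
  "Qinv D lm Tc s = the_inv_into (dom2 D lm Tc) (Qc lm Tc s)"

text \<open>S_L^{-1}(s,A) = (s I - conj A) Q_{c,s}^{-1}(T), for A given by components Ac
  (Ac = Tc for A = T, Ac = cnjop Tc for A = conj T).\<close>
definition SLop :: "'v set \<Rightarrow> (quat \<Rightarrow> 'v::banach \<Rightarrow> 'v) \<Rightarrow> (nat \<Rightarrow> 'v \<Rightarrow> 'v) \<Rightarrow> (nat \<Rightarrow> 'v \<Rightarrow> 'v)
    \<Rightarrow> quat \<Rightarrow> 'v \<Rightarrow> 'v" where
  "SLop D lm Tc Ac s v = lm s (Qinv D lm Tc s v) - opT lm (cnjop Ac) (Qinv D lm Tc s v)"

text \<open>S_R^{-1}(s,A) = s Q_{c,s}^{-1}(T) - sum_i A_i Q_{c,s}^{-1}(T) conj(e_i),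
  where (B a)(v) = B(a v) for an operator B and a quaternion a.\<close>
definition SRop :: "'v set \<Rightarrow> (quat \<Rightarrow> 'v::banach \<Rightarrow> 'v) \<Rightarrow> (nat \<Rightarrow> 'v \<Rightarrow> 'v) \<Rightarrow> (nat \<Rightarrow> 'v \<Rightarrow> 'v)
    \<Rightarrow> quat \<Rightarrow> 'v \<Rightarrow> 'v" where
  "SRop D lm Tc Ac s v = lm s (Qinv D lm Tc s v)
      - (\<Sum>i<4. Ac i (Qinv D lm Tc s (lm (qcnj (qe i)) v)))"

end

theory Submission
  imports Defs
begin


lemma quat_comps:
  "Re0 (x*y) = Re0 x * Re0 y - Im1 x * Im1 y - Im2 x * Im2 y - Im3 x * Im3 y"
  "Im1 (x*y) = Re0 x * Im1 y + Im1 x * Re0 y + Im2 x * Im3 y - Im3 x * Im2 y"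
  "Im2 (x*y) = Re0 x * Im2 y - Im1 x * Im3 y + Im2 x * Re0 y + Im3 x * Im1 y"
  "Im3 (x*y) = Re0 x * Im3 y + Im1 x * Im2 y - Im2 x * Im1 y + Im3 x * Re0 y"
  "Re0 (x+y) = Re0 x + Re0 y" "Im1 (x+y) = Im1 x + Im1 y" "Im2 (x+y) = Im2 x + Im2 y" "Im3 (x+y) = Im3 x + Im3 y"
  "Re0 (x-y) = Re0 x - Re0 y" "Im1 (x-y) = Im1 x - Im1 y" "Im2 (x-y) = Im2 x - Im2 y" "Im3 (x-y) = Im3 x - Im3 y"
  "Re0 (-x) = - Re0 x" "Im1 (-x) = - Im1 x" "Im2 (-x) = - Im2 x" "Im3 (-x) = - Im3 x"
  "Re0 0 = 0" "Im1 0 = 0" "Im2 0 = 0" "Im3 0 = 0"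
  "Re0 1 = 1" "Im1 1 = 0" "Im2 1 = 0" "Im3 1 = 0"
  "Re0 (qreal r) = r" "Im1 (qreal r) = 0" "Im2 (qreal r) = 0" "Im3 (qreal r) = 0"
  "Re0 (qcnj x) = Re0 x" "Im1 (qcnj x) = - Im1 x" "Im2 (qcnj x) = - Im2 x" "Im3 (qcnj x) = - Im3 x"
  by (simp_all add: times_quat_def plus_quat_def minus_quat_def uminus_quat_def zero_quat_def
      one_quat_def qreal_def qcnj_def)

lemma quat_two_eq: "(2::quat) = Quat 2 0 0 0"
proof -
  have "(1::quat) + 1 = Quat 2 0 0 0"
    by (simp only: one_quat_def plus_quat_def quat.sel) simp
  then show ?thesis by (simp only: one_add_one)
qed

lemma quat_two: "Re0 2 = 2" "Im1 2 = 0" "Im2 2 = 0" "Im3 2 = 0"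
  by (simp_all add: quat_two_eq)

lemma qnorm_sq: "(qnorm x)^2 = (Re0 x)^2 + (Im1 x)^2 + (Im2 x)^2 + (Im3 x)^2"
  unfolding qnorm_def by simp

lemma qnorm_sq_qreal: "qreal ((qnorm x)^2) = Quat ((Re0 x)^2 + (Im1 x)^2 + (Im2 x)^2 + (Im3 x)^2) 0 0 0"
  by (simp add: qnorm_sq qreal_def)

lemma sphere_mem:
  assumes "Re0 s = Re0 p" "(Im1 s)^2 + (Im2 s)^2 + (Im3 s)^2 = (Im1 p)^2 + (Im2 p)^2 + (Im3 p)^2"
  shows "s \<in> qsphere p"
proof -
  define r where "r = sqrt ((Im1 s)^2 + (Im2 s)^2 + (Im3 s)^2)"
  have r: "qnorm (p - qreal (Re0 p)) = r"
    using assms(2) by (simp add: qnorm_def r_def quat_comps)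
  show ?thesis
  proof (cases "r = 0")
    case True
    then have "Im1 s = 0" "Im2 s = 0" "Im3 s = 0" using r_def
      by (simp_all add: add_nonneg_eq_0_iff)
    then have "s = qreal (Re0 p) + Quat 0 1 0 0 * qreal r"
      using True assms(1) by (simp add: quat_eq_iff quat_comps)
    moreover have "Quat 0 1 0 0 \<in> qS" by (simp add: qS_def qnorm_def)
    ultimately show ?thesis unfolding qsphere_def r by (intro CollectI exI[of _ "Quat 0 1 0 0"]) simp
  next
    case False
    have r0: "r \<ge> 0" unfolding r_def by simp
    then have rp: "r > 0" using False by simp
    define J where "J = Quat 0 (Im1 s / r) (Im2 s / r) (Im3 s / r)"
    have r2: "r^2 = (Im1 s)^2 + (Im2 s)^2 + (Im3 s)^2" using r_def by simp
    have "(Im1 s / r)^2 + (Im2 s / r)^2 + (Im3 s / r)^2 = ((Im1 s)^2 + (Im2 s)^2 + (Im3 s)^2) / r^2"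
      by (simp add: power_divide add_divide_distrib)
    also have "\<dots> = 1" using rp r2[symmetric] by simp
    finally have "(Im1 s / r)^2 + (Im2 s / r)^2 + (Im3 s / r)^2 = 1" .
    then have "qnorm J = 1" by (simp add: J_def qnorm_def)
    then have "J \<in> qS" by (simp add: qS_def J_def)
    moreover have "s = qreal (Re0 p) + J * qreal r"
      using rp assms(1) by (simp add: quat_eq_iff quat_comps J_def)
    ultimately show ?thesis unfolding qsphere_def r by (intro CollectI exI[of _ J]) simp
  qed
qed



lemma qnorm_mult_self: "qnorm x * qnorm x = (Re0 x)^2 + (Im1 x)^2 + (Im2 x)^2 + (Im3 x)^2"
  using qnorm_sq[of x] by (simp add: power2_eq_square)

lemma qreal_comm: "qreal r * x = x * qreal r"
  by (simp add: quat_eq_iff quat_comps)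

lemma quad_zero:
  assumes "x^2 - 2 * qreal (Re0 y) * x + qreal ((qnorm y)^2) = 0"
  shows "Re0 x = Re0 y \<and> (Im1 x)^2 + (Im2 x)^2 + (Im3 x)^2 = (Im1 y)^2 + (Im2 y)^2 + (Im3 y)^2"
proof -
  have e0: "(Re0 x)^2 - ((Im1 x)^2 + (Im2 x)^2 + (Im3 x)^2) - 2 * Re0 y * Re0 x
      + ((Re0 y)^2 + (Im1 y)^2 + (Im2 y)^2 + (Im3 y)^2) = 0"
    using arg_cong[OF assms, of Re0] by (simp add: quat_comps quat_two qnorm_sq qnorm_mult_self power2_eq_square)
  have e1: "(Re0 x - Re0 y) * Im1 x = 0"
    using arg_cong[OF assms, of Im1] by (simp add: quat_comps quat_two qnorm_sq qnorm_mult_self power2_eq_square algebra_simps)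
  have e2: "(Re0 x - Re0 y) * Im2 x = 0"
    using arg_cong[OF assms, of Im2] by (simp add: quat_comps quat_two qnorm_sq qnorm_mult_self power2_eq_square algebra_simps)
  have e3: "(Re0 x - Re0 y) * Im3 x = 0"
    using arg_cong[OF assms, of Im3] by (simp add: quat_comps quat_two qnorm_sq qnorm_mult_self power2_eq_square algebra_simps)
  show ?thesis
  proof (cases "Re0 x = Re0 y")
    case True
    then show ?thesis using e0 by (simp add: power2_eq_square algebra_simps)
  next
    case False
    then have "Im1 x = 0" "Im2 x = 0" "Im3 x = 0" using e1 e2 e3 by auto
    then have "(Re0 x - Re0 y)^2 + ((Im1 y)^2 + (Im2 y)^2 + (Im3 y)^2) = 0"
      using e0 by (simp add: power2_eq_square algebra_simps)
    then have "(Re0 x - Re0 y)^2 = 0"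
      by (smt (verit) zero_le_power2)
    then show ?thesis using False by simp
  qed
qed

lemma denom1_nz: assumes "s \<notin> qsphere p"
  shows "p^2 - 2 * qreal (Re0 s) * p + qreal ((qnorm s)^2) \<noteq> 0"
  using quad_zero[of p s] sphere_mem[of s p] assms by auto

lemma denom2_nz: assumes "s \<notin> qsphere p"
  shows "s^2 - 2 * qreal (Re0 p) * s + qreal ((qnorm p)^2) \<noteq> 0"
  using quad_zero[of s p] sphere_mem[of s p] assms by auto

lemma SL_ident:
  assumes "s \<notin> qsphere p"
  shows "SLq p s * p - s * SLq p s = 1"
proof -
  define a where "a = p^2 - 2 * qreal (Re0 s) * p + qreal ((qnorm s)^2)"
  have a0: "a \<noteq> 0" using denom1_nz[OF assms] a_def by simp
  have ap: "a * p = p * a"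
    unfolding a_def by (simp add: quat_eq_iff quat_comps quat_two power2_eq_square algebra_simps)
  have ip: "p * inverse a = inverse a * p"
  proof -
    have "inverse a * p = inverse a * (p * a) * inverse a" using a0 by (simp add: mult.assoc)
    also have "\<dots> = inverse a * (a * p) * inverse a" using ap by simp
    also have "\<dots> = p * inverse a" using a0 by (simp add: mult.assoc[symmetric])
    finally show ?thesis by simp
  qed
  have key: "(p - qcnj s) * p - s * (p - qcnj s) = a"
    unfolding a_def by (simp only: qnorm_sq) (simp add: quat_eq_iff quat_comps quat_two power2_eq_square algebra_simps)
  have "SLq p s * p - s * SLq p s = (p - qcnj s) * (inverse a * p) - s * (p - qcnj s) * inverse a"
    by (simp add: SLq_def a_def mult.assoc)
  also have "\<dots> = ((p - qcnj s) * p - s * (p - qcnj s)) * inverse a"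
    by (simp add: ip[symmetric] mult.assoc left_diff_distrib)
  also have "\<dots> = 1" using key a0 by simp
  finally show ?thesis .
qed

lemma SR_SL:
  assumes "s \<notin> qsphere p"
  shows "SRq s p = - SLq p s"
proof -
  define a where "a = p^2 - 2 * qreal (Re0 s) * p + qreal ((qnorm s)^2)"
  define b where "b = s^2 - 2 * qreal (Re0 p) * s + qreal ((qnorm p)^2)"
  have a0: "a \<noteq> 0" using denom1_nz[OF assms] a_def by simp
  have b0: "b \<noteq> 0" using denom2_nz[OF assms] b_def by simp
  have key: "(s - qcnj p) * a + b * (p - qcnj s) = 0"
    unfolding a_def b_def by (simp only: qnorm_sq) (simp add: quat_eq_iff quat_comps quat_two power2_eq_square algebra_simps)
  then have "(s - qcnj p) * a = - (b * (p - qcnj s))" by (simp add: eq_neg_iff_add_eq_0)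
  then have "(s - qcnj p) * a * inverse a = - (b * (p - qcnj s)) * inverse a" by simp
  then have "s - qcnj p = - (b * (p - qcnj s) * inverse a)" using a0 by (simp add: mult.assoc)
  then have "inverse b * (s - qcnj p) = - (inverse b * b * (p - qcnj s) * inverse a)"
    by (simp add: mult.assoc)
  then have "inverse b * (s - qcnj p) = - ((p - qcnj s) * inverse a)" using b0 by simp
  then show ?thesis by (simp add: SRq_def SLq_def a_def b_def mult.assoc)
qed




lemma sum4: "(\<Sum>i<(4::nat). f i) = f 0 + f 1 + f 2 + f (3::nat)"
  by (simp add: eval_nat_numeral ac_simps)

lemma lt4: "(k::nat) < 4 \<longleftrightarrow> k = 0 \<or> k = 1 \<or> k = 2 \<or> k = 3" by auto

lemma qe0: "qe 0 = 1" by (simp add: qe_def one_quat_def)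

lemma qcnj_qe: "k \<noteq> 0 \<Longrightarrow> qcnj (qe k) = - qe k"
  by (simp add: qe_def qcnj_def quat_eq_iff quat_comps)

lemma qcnj_one: "qcnj 1 = 1" by (simp add: quat_eq_iff quat_comps)

lemma qe_diag: "k < 4 \<Longrightarrow> qe k * qcnj (qe k) = 1"
  unfolding lt4 by (auto simp: qe_def qcnj_def quat_eq_iff quat_comps)

lemma qe_anti: "j < 4 \<Longrightarrow> k < 4 \<Longrightarrow> j \<noteq> k \<Longrightarrow> qe k * qcnj (qe j) = - (qe j * qcnj (qe k))"
  unfolding lt4 by (auto simp: qe_def qcnj_def quat_eq_iff quat_comps)

lemma qe_re: "j < 4 \<Longrightarrow> k < 4 \<Longrightarrow> Re0 (qe j * qcnj (qe k)) = (if k = j then 1 else 0)"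
  unfolding lt4 by (auto simp: qe_def qcnj_def quat_comps)

lemma qe_avg: "(\<Sum>m<(4::nat). qe m * q * qcnj (qe m)) = qreal (4 * Re0 q)"
  unfolding sum4 by (simp add: qe_def qcnj_def quat_eq_iff quat_comps)




locale qset =
  fixes lm :: "quat \<Rightarrow> 'v::banach \<Rightarrow> 'v" and rm :: "'v \<Rightarrow> quat \<Rightarrow> 'v"
    and D :: "'v set" and Tc :: "nat \<Rightarrow> 'v \<Rightarrow> 'v"
  assumes tsq: "two_sided_qbanach lm rm" and kc: "KC lm rm D Tc"
begin

lemma lm_add: "lm a (v + w) = lm a v + lm a w" using tsq by (simp add: two_sided_qbanach_def)
lemma lm_addq: "lm (a + b) v = lm a v + lm b v" using tsq by (simp add: two_sided_qbanach_def)
lemma lm_mult: "lm (a * b) v = lm a (lm b v)" using tsq by (simp add: two_sided_qbanach_def)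
lemma lm_one: "lm 1 v = v" using tsq by (simp add: two_sided_qbanach_def)
lemma lm_qreal: "lm (qreal r) v = r *\<^sub>R v" using tsq by (simp add: two_sided_qbanach_def)

lemma add_lm: "Modules.additive (lm a)" by (unfold_locales) (rule lm_add)
lemma add_lmq: "Modules.additive (\<lambda>a. lm a v)" by (unfold_locales) (rule lm_addq)

lemma lm_zero: "lm a 0 = 0" using Modules.additive.zero[OF add_lm] .
lemma lm_minus: "lm a (- v) = - lm a v" using Modules.additive.minus[OF add_lm] .
lemma lm_diff: "lm a (v - w) = lm a v - lm a w" using Modules.additive.diff[OF add_lm] .
lemma lm_sum: "lm a (sum f A) = (\<Sum>x\<in>A. lm a (f x))" using Modules.additive.sum[OF add_lm] .
lemma lmq_zero: "lm 0 v = 0" using Modules.additive.zero[OF add_lmq] .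
lemma lmq_minus: "lm (- a) v = - lm a v" using Modules.additive.minus[OF add_lmq] .
lemma lmq_diff: "lm (a - b) v = lm a v - lm b v" using Modules.additive.diff[OF add_lmq] .
lemma lmq_sum: "lm (sum f A) v = (\<Sum>x\<in>A. lm (f x) v)" using Modules.additive.sum[OF add_lmq] .

lemma sub: "two_sided_subspace lm rm D" using kc unfolding KC_def by blast
lemma D0: "0 \<in> D" using sub unfolding two_sided_subspace_def by blast
lemma Dadd: "v \<in> D \<Longrightarrow> w \<in> D \<Longrightarrow> v + w \<in> D" using sub unfolding two_sided_subspace_def by blast
lemma Dlm: "v \<in> D \<Longrightarrow> lm a v \<in> D" using sub unfolding two_sided_subspace_def by blast
lemma Dminus: "v \<in> D \<Longrightarrow> - v \<in> D"
proof -
  assume "v \<in> D"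
  then have "lm (-1) v \<in> D" by (rule Dlm)
  then show ?thesis by (simp add: lmq_minus lm_one)
qed
lemma Ddiff: "v \<in> D \<Longrightarrow> w \<in> D \<Longrightarrow> v - w \<in> D"
  using Dadd[of v "- w"] Dminus[of w] by simp
lemma Dsum: "finite A \<Longrightarrow> (\<And>x. x \<in> A \<Longrightarrow> f x \<in> D) \<Longrightarrow> sum f A \<in> D"
  by (induction A rule: finite_induct) (auto intro: D0 Dadd)
lemma Dsum4: "(\<And>x. x < 4 \<Longrightarrow> f x \<in> D) \<Longrightarrow> (\<Sum>x<(4::nat). f x) \<in> D"
  by (rule Dsum) auto

lemma Tlin: "i < 4 \<Longrightarrow> two_sided_linear_on lm rm D (Tc i)" using kc unfolding KC_def by blast
lemma Tc_add: "i < 4 \<Longrightarrow> v \<in> D \<Longrightarrow> w \<in> D \<Longrightarrow> Tc i (v + w) = Tc i v + Tc i w"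
  using Tlin unfolding two_sided_linear_on_def by blast
lemma Tc_lm: "i < 4 \<Longrightarrow> v \<in> D \<Longrightarrow> Tc i (lm a v) = lm a (Tc i v)"
  using Tlin unfolding two_sided_linear_on_def by blast
lemma Tc_zero: "i < 4 \<Longrightarrow> Tc i 0 = 0"
  using Tc_add[of i 0 0] D0 by simp
lemma Tc_minus: "i < 4 \<Longrightarrow> v \<in> D \<Longrightarrow> Tc i (- v) = - Tc i v"
  using Tc_add[of i v "- v"] Dminus[of v] Tc_zero[of i] by (metis neg_eq_iff_add_eq_0 add.right_inverse)
lemma Tc_diff: "i < 4 \<Longrightarrow> v \<in> D \<Longrightarrow> w \<in> D \<Longrightarrow> Tc i (v - w) = Tc i v - Tc i w"
  using Tc_add[of i v "- w"] Tc_minus[of i w] Dminus[of w] by simp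
lemma Tc_sum: assumes "i < 4" "finite A" "\<forall>x\<in>A. f x \<in> D"
  shows "Tc i (sum f A) = (\<Sum>x\<in>A. Tc i (f x))"
  using assms(2,3)
proof (induction A rule: finite_induct)
  case empty then show ?case by (simp add: Tc_zero assms(1))
next
  case (insert x F)
  then show ?case by (simp add: Tc_add Dsum assms(1))
qed

abbreviation "dd \<equiv> dom2 D lm Tc"
abbreviation "TT \<equiv> opT lm Tc"
abbreviation "Tb \<equiv> opT lm (cnjop Tc)"
definition "Ksq x = (\<Sum>i<(4::nat). Tc i (Tc i x))"

lemma dd_D: "x \<in> dd \<Longrightarrow> x \<in> D" by (simp add: dom2_def)
lemma dd_T: "x \<in> dd \<Longrightarrow> TT x \<in> D" by (simp add: dom2_def)
lemma dd_I: "x \<in> D \<Longrightarrow> TT x \<in> D \<Longrightarrow> x \<in> dd" by (simp add: dom2_def)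
lemma dd_Tc: "x \<in> dd \<Longrightarrow> j < 4 \<Longrightarrow> Tc j x \<in> D" using kc unfolding KC_def by blast
lemma dd_comm: "x \<in> dd \<Longrightarrow> i < 4 \<Longrightarrow> j < 4 \<Longrightarrow> Tc i (Tc j x) = Tc j (Tc i x)"
  using kc unfolding KC_def by blast

lemma TT_add: "x \<in> D \<Longrightarrow> y \<in> D \<Longrightarrow> TT (x + y) = TT x + TT y"
  unfolding opT_def by (simp add: Tc_add lm_add sum.distrib)
lemma TT_minus: "x \<in> D \<Longrightarrow> TT (- x) = - TT x"
  unfolding opT_def by (simp add: Tc_minus lm_minus sum_negf)
lemma TT_lm: "x \<in> dd \<Longrightarrow> TT (lm c x) = (\<Sum>j<4. lm (qe j * c) (Tc j x))"
  unfolding opT_def by (intro sum.cong) (simp_all add: Tc_lm dd_D lm_mult)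

lemma dd_add: "x \<in> dd \<Longrightarrow> y \<in> dd \<Longrightarrow> x + y \<in> dd"
  by (intro dd_I) (simp_all add: dd_D Dadd TT_add dd_T)
lemma dd_minus: "x \<in> dd \<Longrightarrow> - x \<in> dd"
  by (intro dd_I) (simp_all add: dd_D Dminus TT_minus dd_T)
lemma dd_lm: "x \<in> dd \<Longrightarrow> lm c x \<in> dd"
  by (intro dd_I) (simp_all add: dd_D Dlm TT_lm Dsum4 dd_Tc)


lemma Qc_K: "Qc lm Tc s x = lm (s^2) x - lm (2 * s) (Tc 0 x) + Ksq x"
  by (simp add: Qc_def Ksq_def)

lemma Ksq_D_of: "x \<in> dd \<Longrightarrow> Qc lm Tc s x \<in> D \<Longrightarrow> Ksq x \<in> D"
proof -
  assume x: "x \<in> dd" and q: "Qc lm Tc s x \<in> D"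
  have "Ksq x = Qc lm Tc s x - lm (s^2) x + lm (2 * s) (Tc 0 x)" by (simp add: Qc_K)
  moreover have "lm (s^2) x \<in> D" "lm (2 * s) (Tc 0 x) \<in> D" using x by (simp_all add: Dlm dd_D dd_Tc)
  ultimately show ?thesis using q by (simp add: Dadd Ddiff)
qed

lemma Ksq_lm: "x \<in> dd \<Longrightarrow> Ksq (lm c x) = lm c (Ksq x)"
  unfolding Ksq_def lm_sum by (intro sum.cong) (simp_all add: Tc_lm dd_D dd_Tc)

lemma Ksq_add: "x \<in> dd \<Longrightarrow> y \<in> dd \<Longrightarrow> Ksq (x + y) = Ksq x + Ksq y"
  unfolding Ksq_def sum.distrib[symmetric] by (intro sum.cong) (simp_all add: Tc_add dd_D dd_Tc)

lemma Qc_lm: "x \<in> dd \<Longrightarrow> Qc lm Tc s (lm c x) = lm (s^2 * c) x - lm (2 * s * c) (Tc 0 x) + lm c (Ksq x)"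
  by (simp add: Qc_K Ksq_lm Tc_lm dd_D lm_mult)

lemma Qc_add: "x \<in> dd \<Longrightarrow> y \<in> dd \<Longrightarrow> Qc lm Tc s (x + y) = Qc lm Tc s x + Qc lm Tc s y"
  by (simp add: Qc_K Ksq_add Tc_add dd_D lm_add)

lemma Qc_zero: "Qc lm Tc s 0 = 0"
proof -
  have z: "(0::'v) \<in> dd" by (intro dd_I) (simp_all add: D0 opT_def Tc_zero lm_zero)
  have "Qc lm Tc s 0 = Qc lm Tc s (0 + 0)" by simp
  also have "\<dots> = Qc lm Tc s 0 + Qc lm Tc s 0" using Qc_add[OF z z] .
  finally show ?thesis by simp
qed

lemma Qc_minus: "x \<in> dd \<Longrightarrow> Qc lm Tc s (- x) = - Qc lm Tc s x"
  using Qc_add[of x "- x" s] dd_minus[of x] Qc_zero[of s]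
  by (metis neg_eq_iff_add_eq_0 add.right_inverse)

section \<open>The inverse\<close>

context
  fixes s assumes srho: "s \<in> rhoS D lm Tc"
begin

lemma bij: "bij_betw (Qc lm Tc s) dd UNIV" using srho by (simp add: rhoS_def)
lemma injQ: "inj_on (Qc lm Tc s) dd" using bij by (simp add: bij_betw_def)
lemma surjQ: "v \<in> Qc lm Tc s ` dd" using bij by (simp add: bij_betw_def)

lemma Qinv_in: "Qinv D lm Tc s v \<in> dd"
  unfolding Qinv_def by (rule the_inv_into_into[OF injQ surjQ]) simp
lemma Qc_Qinv: "Qc lm Tc s (Qinv D lm Tc s v) = v"
  unfolding Qinv_def by (rule f_the_inv_into_f[OF injQ surjQ])
lemma Qinv_Qc: "x \<in> dd \<Longrightarrow> Qinv D lm Tc s (Qc lm Tc s x) = x"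
  unfolding Qinv_def by (rule the_inv_into_f_f[OF injQ])
lemma Qinv_unique: "x \<in> dd \<Longrightarrow> Qc lm Tc s x = u \<Longrightarrow> Qinv D lm Tc s u = x"
  using Qinv_Qc by blast

lemma Qinv_add: "Qinv D lm Tc s (u + v) = Qinv D lm Tc s u + Qinv D lm Tc s v"
  by (rule Qinv_unique) (simp_all add: dd_add Qinv_in Qc_add Qc_Qinv)

lemma add_Qinv: "Modules.additive (Qinv D lm Tc s)" by unfold_locales (rule Qinv_add)
lemma Qinv_minus: "Qinv D lm Tc s (- u) = - Qinv D lm Tc s u" using Modules.additive.minus[OF add_Qinv] .
lemma Qinv_diff: "Qinv D lm Tc s (u - v) = Qinv D lm Tc s u - Qinv D lm Tc s v"
  using Modules.additive.diff[OF add_Qinv] .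
lemma Qinv_sum: "Qinv D lm Tc s (sum f A) = (\<Sum>x\<in>A. Qinv D lm Tc s (f x))"
  using Modules.additive.sum[OF add_Qinv] .

end


section \<open>Conjugate operator\<close>

lemma cnjop_lm: "i < 4 \<Longrightarrow> v \<in> D \<Longrightarrow> cnjop Tc i (lm a v) = lm a (cnjop Tc i v)"
  by (simp add: cnjop_def Tc_lm lm_minus)

lemma Tb_eq: "Tb v = (\<Sum>k<4. lm (qcnj (qe k)) (Tc k v))"
  unfolding opT_def
proof (intro sum.cong refl)
  fix k assume "k \<in> {..<(4::nat)}"
  show "lm (qe k) (cnjop Tc k v) = lm (qcnj (qe k)) (Tc k v)"
  proof (cases "k = 0")
    case True then show ?thesis by (simp add: cnjop_def qe0 qcnj_one)
  next
    case False then show ?thesis by (simp add: cnjop_def qcnj_qe lm_minus lmq_minus)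
  qed
qed

lemma symsum:
  assumes "\<And>j k. j < 4 \<Longrightarrow> k < 4 \<Longrightarrow> Z j k = Z k j"
  shows "(\<Sum>j<(4::nat). \<Sum>k<(4::nat). lm (qe j * qcnj (qe k)) (Z j k)) = (\<Sum>j<4. Z j j)"
proof -
  have a10: "lm (qe 1 * qcnj (qe 0)) (Z 1 0) = - lm (qe 0 * qcnj (qe 1)) (Z 0 1)"
    using qe_anti[of 0 1] assms[of 1 0] by (simp add: lmq_minus)
  have a20: "lm (qe 2 * qcnj (qe 0)) (Z 2 0) = - lm (qe 0 * qcnj (qe 2)) (Z 0 2)"
    using qe_anti[of 0 2] assms[of 2 0] by (simp add: lmq_minus)
  have a30: "lm (qe 3 * qcnj (qe 0)) (Z 3 0) = - lm (qe 0 * qcnj (qe 3)) (Z 0 3)"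
    using qe_anti[of 0 3] assms[of 3 0] by (simp add: lmq_minus)
  have a21: "lm (qe 2 * qcnj (qe 1)) (Z 2 1) = - lm (qe 1 * qcnj (qe 2)) (Z 1 2)"
    using qe_anti[of 1 2] assms[of 2 1] by (simp add: lmq_minus)
  have a31: "lm (qe 3 * qcnj (qe 1)) (Z 3 1) = - lm (qe 1 * qcnj (qe 3)) (Z 1 3)"
    using qe_anti[of 1 3] assms[of 3 1] by (simp add: lmq_minus)
  have a32: "lm (qe 3 * qcnj (qe 2)) (Z 3 2) = - lm (qe 2 * qcnj (qe 3)) (Z 2 3)"
    using qe_anti[of 2 3] assms[of 3 2] by (simp add: lmq_minus)
  have d: "lm (qe 0 * qcnj (qe 0)) (Z 0 0) = Z 0 0" "lm (qe 1 * qcnj (qe 1)) (Z 1 1) = Z 1 1"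
     "lm (qe 2 * qcnj (qe 2)) (Z 2 2) = Z 2 2" "lm (qe 3 * qcnj (qe 3)) (Z 3 3) = Z 3 3"
    by (simp_all add: qe_diag lm_one)
  show ?thesis unfolding sum4 a10 a20 a30 a21 a31 a32 d by (simp add: algebra_simps)
qed

lemma TTb: "y \<in> dd \<Longrightarrow> TT (Tb y) = Ksq y"
proof -
  assume y: "y \<in> dd"
  have "TT (Tb y) = (\<Sum>j<4. lm (qe j) (Tc j (\<Sum>k<4. lm (qcnj (qe k)) (Tc k y))))"
    unfolding opT_def[of lm Tc] Tb_eq ..
  also have "\<dots> = (\<Sum>j<(4::nat). \<Sum>k<(4::nat). lm (qe j * qcnj (qe k)) (Tc j (Tc k y)))"
    by (intro sum.cong refl) (simp add: Tc_sum Dlm dd_Tc y Tc_lm lm_sum lm_mult)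
  also have "\<dots> = (\<Sum>j<4. Tc j (Tc j y))"
    by (rule symsum) (simp add: dd_comm y)
  finally show ?thesis by (simp add: Ksq_def)
qed

lemma Tb_D: "y \<in> dd \<Longrightarrow> Tb y \<in> D"
  unfolding Tb_eq by (intro Dsum4 Dlm dd_Tc) auto

lemma iso:
  assumes h: "\<And>c. (\<Sum>k<(4::nat). lm (qcnj (qe k) * c) (Y k)) \<in> D" and k': "k' < 4"
  shows "Y k' \<in> D"
proof -
  define W where "W c = (\<Sum>k<(4::nat). lm (qcnj (qe k) * c) (Y k))" for c
  have "(\<Sum>m<(4::nat). lm (qe m * qe k') (W (qcnj (qe m)))) \<in> D"
    by (intro Dsum4 Dlm) (simp add: W_def h)
  also have "(\<Sum>m<(4::nat). lm (qe m * qe k') (W (qcnj (qe m))))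
      = (\<Sum>m<(4::nat). \<Sum>k<(4::nat). lm (qe m * (qe k' * qcnj (qe k)) * qcnj (qe m)) (Y k))"
    unfolding W_def lm_sum by (simp add: lm_mult[symmetric] mult.assoc)
  also have "\<dots> = (\<Sum>k<(4::nat). \<Sum>m<(4::nat). lm (qe m * (qe k' * qcnj (qe k)) * qcnj (qe m)) (Y k))"
    by (rule sum.swap)
  also have "\<dots> = (\<Sum>k<(4::nat). lm (qreal (4 * Re0 (qe k' * qcnj (qe k)))) (Y k))"
    by (simp add: lmq_sum[symmetric] qe_avg)
  also have "\<dots> = (\<Sum>k<(4::nat). (if k = k' then 4 *\<^sub>R Y k else 0))"
    by (intro sum.cong refl) (simp add: qe_re k' lm_qreal)
  also have "\<dots> = 4 *\<^sub>R Y k'" using k' by simp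
  finally have "4 *\<^sub>R Y k' \<in> D" .
  then have "lm (qreal (1/4)) (4 *\<^sub>R Y k') \<in> D" by (rule Dlm)
  then show ?thesis by (simp add: lm_qreal)
qed


lemma TcTc_D:
  assumes x: "x \<in> dd" and kx: "Ksq x \<in> D" and j: "j < 4" and k: "k < 4"
  shows "Tc j (Tc k x) \<in> D"
proof (rule iso[OF _ k])
  fix c
  have y: "lm c x \<in> dd" using x by (rule dd_lm)
  have ky: "Ksq (lm c x) \<in> D" using x kx by (simp add: Ksq_lm Dlm)
  have "Tb (lm c x) \<in> dd" by (intro dd_I Tb_D y) (simp add: TTb y ky)
  then have "Tc j (Tb (lm c x)) \<in> D" using j by (rule dd_Tc)
  also have "Tc j (Tb (lm c x)) = (\<Sum>k<(4::nat). lm (qcnj (qe k) * c) (Tc j (Tc k x)))"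
    unfolding Tb_eq
    by (simp add: Tc_sum j Dlm dd_Tc y x Tc_lm dd_D lm_mult)
  finally show "(\<Sum>k<(4::nat). lm (qcnj (qe k) * c) (Tc j (Tc k x))) \<in> D" .
qed

lemma comm:
  assumes srho: "s \<in> rhoS D lm Tc" and u: "u \<in> D" and i: "i < 4"
  shows "Tc i (Qinv D lm Tc s u) = Qinv D lm Tc s (Tc i u)"
proof -
  define x where "x = Qinv D lm Tc s u"
  have x: "x \<in> dd" unfolding x_def by (rule Qinv_in[OF srho])
  have qx: "Qc lm Tc s x = u" unfolding x_def by (rule Qc_Qinv[OF srho])
  have kx: "Ksq x \<in> D" using Ksq_D_of[OF x, of s] qx u by simp
  have tt: "Tc j (Tc k x) \<in> D" if "j < 4" "k < 4" for j k using TcTc_D[OF x kx that] .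
  have txd: "Tc k x \<in> dd" if "k < 4" for k
    by (intro dd_I) (simp_all add: dd_Tc x that opT_def Dsum4 Dlm tt)
  have "Tc i u = Tc i (lm (s^2) x - lm (2 * s) (Tc 0 x) + Ksq x)" using qx by (simp add: Qc_K)
  also have "\<dots> = lm (s^2) (Tc i x) - lm (2 * s) (Tc i (Tc 0 x)) + Tc i (Ksq x)"
    using i x kx by (simp add: Tc_add Tc_diff Ddiff Dlm dd_D dd_Tc Tc_lm)
  also have "Tc i (Ksq x) = Ksq (Tc i x)"
  proof -
    have "Tc i (Ksq x) = (\<Sum>k<4. Tc i (Tc k (Tc k x)))"
      unfolding Ksq_def by (rule Tc_sum[OF i]) (simp_all add: tt)
    also have "\<dots> = (\<Sum>k<4. Tc k (Tc k (Tc i x)))"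
    proof (intro sum.cong refl)
      fix k assume "k \<in> {..<(4::nat)}"
      then have k: "k < 4" by simp
      have "Tc i (Tc k (Tc k x)) = Tc k (Tc i (Tc k x))" using dd_comm[OF txd[OF k] i k] .
      also have "\<dots> = Tc k (Tc k (Tc i x))" using dd_comm[OF x i k] by simp
      finally show "Tc i (Tc k (Tc k x)) = Tc k (Tc k (Tc i x))" .
    qed
    finally show ?thesis by (simp add: Ksq_def)
  qed
  also have "Tc i (Tc 0 x) = Tc 0 (Tc i x)" using dd_comm[OF x i, of 0] by simp
  finally have "Tc i u = Qc lm Tc s (Tc i x)" by (simp add: Qc_K)
  then have "Qinv D lm Tc s (Tc i u) = Tc i x"
    by (intro Qinv_unique[OF srho] txd i) simp
  then show ?thesis by (simp add: x_def)
qed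

lemma comm_cnj:
  assumes srho: "s \<in> rhoS D lm Tc" and u: "u \<in> D" and i: "i < 4"
  shows "cnjop Tc i (Qinv D lm Tc s u) = Qinv D lm Tc s (cnjop Tc i u)"
  using comm[OF srho u i] by (cases "i = 0") (simp_all add: cnjop_def Qinv_minus[OF srho])


lemma SRsum_cnj:
  assumes srho: "s \<in> rhoS D lm Tc" and w: "w \<in> dd"
  shows "(\<Sum>i<4. cnjop Tc i (Qinv D lm Tc s (lm (qcnj (qe i)) w))) = Qinv D lm Tc s (TT w)"
proof -
  have "(\<Sum>i<4. cnjop Tc i (Qinv D lm Tc s (lm (qcnj (qe i)) w)))
      = (\<Sum>i<4. Qinv D lm Tc s (lm (qcnj (qe i)) (cnjop Tc i w)))"
    by (intro sum.cong refl) (simp add: comm_cnj[OF srho] Dlm dd_D w cnjop_lm)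
  also have "\<dots> = Qinv D lm Tc s (\<Sum>i<4. lm (qcnj (qe i)) (cnjop Tc i w))"
    by (simp add: Qinv_sum[OF srho])
  also have "(\<Sum>i<4. lm (qcnj (qe i)) (cnjop Tc i w)) = TT w"
    unfolding opT_def
  proof (intro sum.cong refl)
    fix k assume "k \<in> {..<(4::nat)}"
    show "lm (qcnj (qe k)) (cnjop Tc k w) = lm (qe k) (Tc k w)"
    proof (cases "k = 0")
      case True then show ?thesis by (simp add: cnjop_def qe0 qcnj_one)
    next
      case False then show ?thesis by (simp add: cnjop_def qcnj_qe lm_minus lmq_minus)
    qed
  qed
  finally show ?thesis .
qed

lemma SRsum:
  assumes srho: "s \<in> rhoS D lm Tc" and w: "w \<in> dd"
  shows "(\<Sum>i<4. Tc i (Qinv D lm Tc s (lm (qcnj (qe i)) w))) = Qinv D lm Tc s (Tb w)"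
proof -
  have "(\<Sum>i<4. Tc i (Qinv D lm Tc s (lm (qcnj (qe i)) w)))
      = (\<Sum>i<4. Qinv D lm Tc s (lm (qcnj (qe i)) (Tc i w)))"
    by (intro sum.cong refl) (simp add: comm[OF srho] Dlm dd_D w Tc_lm)
  also have "\<dots> = Qinv D lm Tc s (Tb w)"
    by (simp add: Qinv_sum[OF srho] Tb_eq)
  finally show ?thesis .
qed

lemma TplusTb: "TT w + Tb w = Tc 0 w + Tc 0 w"
  unfolding opT_def sum4 by (simp add: cnjop_def qe0 lm_one lm_minus)

end

lemma cnjop_cnjop: "cnjop (cnjop Tc) = Tc"
  by (intro ext) (simp add: cnjop_def)

lemma scal1:
  fixes X p s :: quat
  assumes "X * p - s * X = 1"
  shows "X * p^2 - s^2 * X = p + s" "X * (2 * p) - 2 * s * X = 2"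
proof -
  have "X * p^2 - s^2 * X = (X * p - s * X) * p + s * (X * p - s * X)"
    by (simp add: power2_eq_square algebra_simps)
  then show "X * p^2 - s^2 * X = p + s" using assms by simp
  have "X * (2 * p) - 2 * s * X = (X * p - s * X) + (X * p - s * X)"
    by (simp add: mult_2 mult_2_right algebra_simps)
  then show "X * (2 * p) - 2 * s * X = 2" using assms by simp
qed

theorem lemma3p9:
  fixes lm :: "quat \<Rightarrow> 'v::banach \<Rightarrow> 'v" and rm :: "'v \<Rightarrow> quat \<Rightarrow> 'v"
    and D :: "'v set" and Tc :: "nat \<Rightarrow> 'v \<Rightarrow> 'v" and s p :: quat
  assumes "two_sided_qbanach lm rm"
    and "KC lm rm D Tc"
    and "s \<in> rhoS D lm Tc" and "p \<in> rhoS D lm Tc"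
    and "s \<notin> qsphere p"
  shows "(\<lambda>v. Qinv D lm Tc s (lm (SLq p s) v) + lm (SRq s p) (Qinv D lm Tc p v))
       = (\<lambda>v. Qinv D lm Tc s (SLop D lm Tc Tc p v) + SRop D lm Tc (cnjop Tc) s (Qinv D lm Tc p v))
   \<and> (\<lambda>v. Qinv D lm Tc s (SLop D lm Tc Tc p v) + SRop D lm Tc (cnjop Tc) s (Qinv D lm Tc p v))
       = (\<lambda>v. Qinv D lm Tc s (SLop D lm Tc (cnjop Tc) p v) + SRop D lm Tc Tc s (Qinv D lm Tc p v))"
proof -
  interpret qset lm rm D Tc using assms(1,2) by unfold_locales
  note srho = assms(3) and prho = assms(4)
  define A where "A = Qinv D lm Tc s"
  define SL where "SL = SLq p s"
  have SR: "SRq s p = - SL" unfolding SL_def by (rule SR_SL[OF assms(5)])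
  have SLi: "SL * p - s * SL = 1" unfolding SL_def by (rule SL_ident[OF assms(5)])
  have e1: "Qinv D lm Tc s (lm (SLq p s) v) + lm (SRq s p) (Qinv D lm Tc p v)
      = Qinv D lm Tc s (SLop D lm Tc Tc p v) + SRop D lm Tc (cnjop Tc) s (Qinv D lm Tc p v)" for v
  proof -
    define w where "w = Qinv D lm Tc p v"
    have w: "w \<in> dd" unfolding w_def by (rule Qinv_in[OF prho])
    have v: "v = Qc lm Tc p w" unfolding w_def by (rule Qc_Qinv[OF prho, symmetric])
    have Aadd: "A (x + y) = A x + A y" for x y unfolding A_def by (rule Qinv_add[OF srho])
    have Adiff: "A (x - y) = A x - A y" for x y unfolding A_def by (rule Qinv_diff[OF srho])
    have As: "lm s (A w) = A (lm s w)"
    proof -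
      have x: "A w \<in> dd" unfolding A_def by (rule Qinv_in[OF srho])
      have "Qc lm Tc s (lm s (A w)) = lm (s^2 * s) (A w) - lm (2 * s * s) (Tc 0 (A w)) + lm s (Ksq (A w))"
        by (rule Qc_lm[OF x])
      also have "\<dots> = lm s (Qc lm Tc s (A w))"
        by (simp add: Qc_K lm_add lm_diff lm_mult[symmetric] power2_eq_square mult.assoc
            mult_2 mult_2_right distrib_left distrib_right)
      also have "\<dots> = lm s w" unfolding A_def by (simp add: Qc_Qinv[OF srho])
      finally show ?thesis unfolding A_def by (intro Qinv_unique[OF srho, symmetric] dd_lm x[unfolded A_def])
    qed
    have ASR: "lm (SRq s p) w = A (Qc lm Tc s (lm (SRq s p) w))"
      unfolding A_def by (simp add: Qinv_Qc[OF srho] dd_lm w)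
    have key: "lm SL v + Qc lm Tc s (lm (SRq s p) w) = lm p w - Tb w + lm s w - TT w"
    proof -
      have "lm SL v + Qc lm Tc s (lm (SRq s p) w)
          = lm (SL * p^2 - s^2 * SL) w - lm (SL * (2 * p) - 2 * s * SL) (Tc 0 w) + lm (SL - SL) (Ksq w)"
        unfolding v Qc_lm[OF w] SR by (simp add: Qc_K lm_add lm_diff lm_mult lmq_diff lmq_minus lmq_zero algebra_simps)
      also have "\<dots> = lm (p + s) w - lm 2 (Tc 0 w)" using scal1[OF SLi] by (simp add: lmq_zero)
      also have "\<dots> = lm p w + lm s w - (Tc 0 w + Tc 0 w)"
        using lm_addq[of 1 1 "Tc 0 w"] by (simp add: lm_addq lm_one)
      also have "\<dots> = lm p w - Tb w + lm s w - TT w" using TplusTb[of w] by (simp add: algebra_simps)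
      finally show ?thesis .
    qed
    have "Qinv D lm Tc s (lm (SLq p s) v) + lm (SRq s p) (Qinv D lm Tc p v)
        = A (lm SL v) + A (Qc lm Tc s (lm (SRq s p) w))"
      using ASR by (simp add: A_def SL_def w_def)
    also have "\<dots> = A (lm p w - Tb w + lm s w - TT w)" by (simp add: Aadd[symmetric] key)
    also have "\<dots> = A (lm p w - Tb w) + (lm s (A w) - A (TT w))" by (simp add: Aadd Adiff As)
    also have "\<dots> = Qinv D lm Tc s (SLop D lm Tc Tc p v) + SRop D lm Tc (cnjop Tc) s (Qinv D lm Tc p v)"
      by (simp add: SLop_def SRop_def A_def w_def SRsum_cnj[OF srho Qinv_in[OF prho]])
    finally show ?thesis .
  qed
  have e2: "Qinv D lm Tc s (SLop D lm Tc Tc p v) + SRop D lm Tc (cnjop Tc) s (Qinv D lm Tc p v)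
      = Qinv D lm Tc s (SLop D lm Tc (cnjop Tc) p v) + SRop D lm Tc Tc s (Qinv D lm Tc p v)" for v
    by (simp add: SLop_def SRop_def cnjop_cnjop SRsum_cnj[OF srho Qinv_in[OF prho]]
        SRsum[OF srho Qinv_in[OF prho]] Qinv_diff[OF srho])
  show ?thesis using e1 e2 by auto
qed


end
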